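(* In the setting described in the context, write $c=\hat u_1\cdot\hat e_1$ and $s=\hat u_3\cdot\hat e_1$, and consider the conditions (EC1) $\lambda_1\sqrt{\lambda_3^2-1}\,s=-\lambda_3\sqrt{1-\lambda_1^2}\,c$; (EC2) $\lambda_1\sqrt{\lambda_3^2-1}\,c=-\lambda_3\sqrt{1-\lambda_1^2}\,s$; (EC3) $\sqrt{1-\lambda_1^2}\,s=-\sqrt{\lambda_3^2-1}\,c$; (EC4) $\sqrt{1-\lambda_1^2}\,c=-\sqrt{\lambda_3^2-1}\,s$. Then: if the red triple is a triple cluster of the first kind, (EC1) holds; if the green triple is a triple cluster of the first kind, (EC2) holds; if the red triple is a triple cluster of the second kind, (EC3) holds; if the green triple is a triple cluster of the second kind, (EC4) holds. In particular, if a triple cluster (red or green, of either kind) exists, at least one of (EC1)–(EC4) holds.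
   Context: Setting: Let $U$ be a real symmetric positive-definite $3\times3$ matrix with eigenvalues $0<\lambda_1<\lambda_2=1<\lambda_3$ and orthonormal eigenvectors $\hat u_1,\hat u_2,\hat u_3$. Let $\hat e_1,\hat e_2$ be orthonormal vectors orthogonal to $\hat u_2$, oriented so that $\hat u_1\cdot\hat e_1=\hat u_3\cdot\hat e_2$ and $\hat u_3\cdot\hat e_1=-\hat u_1\cdot\hat e_2$, and such that $V:=(-I+2\hat e_1\otimes\hat e_1)U(-I+2\hat e_1\otimes\hat e_1)=(-I+2\hat e_2\otimes\hat e_2)U(-I+2\hat e_2\otimes\hat e_2)$ satisfies $V\neq U$ ($U,V$ form compound domains with symmetry axes $\hat e_1,\hat e_2$). Austenite connections: for $\kappa=\pm1$ let $R_\kappa\in SO(3)$, $b_\kappa$, $\hat m_\kappa$ be the two solutions of $R_\kappa U-I=b_\kappa\otimes\hat m_\kappa$, given by $b_\kappa=\frac{\rho}{\sqrt{\lambda_3^2-\lambda_1^2}}(\lambda_3\sqrt{1-\lambda_1^2}\,\hat u_1+\kappa\lambda_1\sqrt{\lambda_3^2-1}\,\hat u_3)$, $\hat m_\kappa=\frac{\lambda_3-\lambda_1}{\rho\sqrt{\lambda_3^2-\lambda_1^2}}(-\sqrt{1-\lambda_1^2}\,\hat u_1+\kappa\sqrt{\lambda_3^2-1}\,\hat u_3)$ with $\rho\neq0$ normalizing $\hat m_\kappa$. Equivalently $U-R_\kappa^T=(R_\kappa^Tb_\kappa)\otimes\hat m_\kappa$. Twin connections (known): there are $Q^{(1)},Q^{(2)}\in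 SO(3)$ and nonzero scalars $\zeta,\eta$ with $Q^{(1)}V-U=\zeta\,U\hat e_2\otimes\hat e_1$ and $Q^{(2)}V-U=\eta\,U\hat e_1\otimes\hat e_2$. Triple clusters: the red triple is $(U,Q^{(1)}V,R_{+}^T)$ and the green triple is $(U,Q^{(2)}V,R_{-}^T)$. The red triple is a triple cluster of the first kind if $R_+^Tb_+\parallel U\hat e_2$ (all pairwise differences are then rank-one with parallel shear vectors), and of the second kind if $\hat m_+\parallel\hat e_1$ (all pairwise differences are then rank-one with a common normal). The green triple is of the first kind if $R_-^Tb_-\parallel U\hat e_1$, and of the second kind if $\hat m_-\parallel\hat e_2$. *)

theory Defs
  imports "HOL-Analysis.Analysis"
begin

definition outer :: "real^3 \<Rightarrow> real^3 \<Rightarrow> real^3^3" where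
  "outer a b = (\<chi> i j. a $ i * b $ j)"

definition SO3 :: "real^3^3 \<Rightarrow> bool" where
  "SO3 R \<longleftrightarrow> orthogonal_matrix R \<and> det R = 1"

definition parallel :: "real^3 \<Rightarrow> real^3 \<Rightarrow> bool" where
  "parallel x y \<longleftrightarrow> (\<exists>t. x = t *\<^sub>R y) \<or> (\<exists>t. y = t *\<^sub>R x)"

definition bvec :: "real \<Rightarrow> real \<Rightarrow> real \<Rightarrow> real \<Rightarrow> real^3 \<Rightarrow> real^3 \<Rightarrow> real^3" where
  "bvec l1 l3 \<rho> \<kappa> u1 u3 =
     (\<rho> / sqrt (l3\<^sup>2 - l1\<^sup>2)) *\<^sub>R
       ((l3 * sqrt (1 - l1\<^sup>2)) *\<^sub>R u1 + (\<kappa> * l1 * sqrt (l3\<^sup>2 - 1)) *\<^sub>R u3)"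

definition mvec :: "real \<Rightarrow> real \<Rightarrow> real \<Rightarrow> real \<Rightarrow> real^3 \<Rightarrow> real^3 \<Rightarrow> real^3" where
  "mvec l1 l3 \<rho> \<kappa> u1 u3 =
     ((l3 - l1) / (\<rho> * sqrt (l3\<^sup>2 - l1\<^sup>2))) *\<^sub>R
       ((- sqrt (1 - l1\<^sup>2)) *\<^sub>R u1 + (\<kappa> * sqrt (l3\<^sup>2 - 1)) *\<^sub>R u3)"

end

theory Submission
  imports Defs
begin


lemma sym_dot: "transpose U = (U::real^3^3) \<Longrightarrow> (U *v x) \<bullet> y = x \<bullet> (U *v y)"
  by (metis dot_lmul_matrix vector_transpose_matrix)

lemma outer_mv: "outer a b *v x = (b \<bullet> x) *\<^sub>R a"
  unfolding outer_def
  by (simp add: vec_eq_iff matrix_vector_mult_def inner_vec_def sum_distrib_left mult.commute mult.left_commute)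

lemma outer_tr: "transpose (outer a b) = outer b a"
  unfolding outer_def transpose_def by (simp add: vec_eq_iff mult.commute)

lemma transpose_add: "transpose (A + B) = transpose A + transpose (B::real^3^3)"
  unfolding transpose_def by (simp add: vec_eq_iff)

lemma par_det: "parallel x y \<Longrightarrow> (x \<bullet> p) * (y \<bullet> q) = (x \<bullet> q) * (y \<bullet> p)"
  unfolding parallel_def by auto

lemma RtB:
  fixes U R :: "real^3^3"
  assumes "transpose U = U" "R ** U - mat 1 = outer b m"
  shows "U *v (transpose R *v b) = b + (b \<bullet> b) *\<^sub>R m"
proof -
  have "R ** U = mat 1 + outer b m" using assms(2) by (metis diff_add_cancel add.commute)
  hence "transpose (R ** U) = mat 1 + outer m b"
    by (simp add: outer_tr transpose_add)
  hence "U ** transpose R = mat 1 + outer m b" using assms(1) by (simp add: matrix_transpose_mul)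
  hence "U *v (transpose R *v b) = (mat 1 + outer m b) *v b"
    by (metis matrix_vector_mul_assoc)
  thus ?thesis by (simp add: matrix_vector_mult_add_rdistrib outer_mv inner_commute)
qed

theorem mainTheorem6:
  fixes U V Rp Rm Q1 Q2 :: "real^3^3"
    and u1 u2 u3 e1 e2 :: "real^3"
    and l1 l3 \<rho> \<zeta> \<eta> :: real
  assumes U_sym: "transpose U = U"
    and U_pd: "\<forall>x. x \<noteq> 0 \<longrightarrow> x \<bullet> (U *v x) > 0"
    and eigs: "0 < l1" "l1 < 1" "1 < l3"
    and eig1: "U *v u1 = l1 *\<^sub>R u1" and eig2: "U *v u2 = u2" and eig3: "U *v u3 = l3 *\<^sub>R u3"
    and on_u: "norm u1 = 1" "norm u2 = 1" "norm u3 = 1"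
              "u1 \<bullet> u2 = 0" "u1 \<bullet> u3 = 0" "u2 \<bullet> u3 = 0"
    and on_e: "norm e1 = 1" "norm e2 = 1" "e1 \<bullet> e2 = 0" "e1 \<bullet> u2 = 0" "e2 \<bullet> u2 = 0"
    and orient: "u1 \<bullet> e1 = u3 \<bullet> e2" "u3 \<bullet> e1 = - (u1 \<bullet> e2)"
    and V1: "V = (- mat 1 + 2 *\<^sub>R outer e1 e1) ** U ** (- mat 1 + 2 *\<^sub>R outer e1 e1)"
    and V2: "V = (- mat 1 + 2 *\<^sub>R outer e2 e2) ** U ** (- mat 1 + 2 *\<^sub>R outer e2 e2)"
    and VU: "V \<noteq> U"
    and rho: "\<rho> \<noteq> 0" "norm (mvec l1 l3 \<rho> 1 u1 u3) = 1"
    and Rp: "SO3 Rp" "Rp ** U - mat 1 = outer (bvec l1 l3 \<rho> 1 u1 u3) (mvec l1 l3 \<rho> 1 u1 u3)"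
    and Rm: "SO3 Rm" "Rm ** U - mat 1 = outer (bvec l1 l3 \<rho> (-1) u1 u3) (mvec l1 l3 \<rho> (-1) u1 u3)"
    and Q1: "SO3 Q1" "\<zeta> \<noteq> 0" "Q1 ** V - U = \<zeta> *\<^sub>R outer (U *v e2) e1"
    and Q2: "SO3 Q2" "\<eta> \<noteq> 0" "Q2 ** V - U = \<eta> *\<^sub>R outer (U *v e1) e2"
  defines "c \<equiv> u1 \<bullet> e1" and "s \<equiv> u3 \<bullet> e1"
  defines "EC1 \<equiv> l1 * sqrt (l3\<^sup>2 - 1) * s = - (l3 * sqrt (1 - l1\<^sup>2) * c)"
    and "EC2 \<equiv> l1 * sqrt (l3\<^sup>2 - 1) * c = - (l3 * sqrt (1 - l1\<^sup>2) * s)"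
    and "EC3 \<equiv> sqrt (1 - l1\<^sup>2) * s = - (sqrt (l3\<^sup>2 - 1) * c)"
    and "EC4 \<equiv> sqrt (1 - l1\<^sup>2) * c = - (sqrt (l3\<^sup>2 - 1) * s)"
  defines "red1 \<equiv> parallel (transpose Rp *v bvec l1 l3 \<rho> 1 u1 u3) (U *v e2)"
    and "green1 \<equiv> parallel (transpose Rm *v bvec l1 l3 \<rho> (-1) u1 u3) (U *v e1)"
    and "red2 \<equiv> parallel (mvec l1 l3 \<rho> 1 u1 u3) e1"
    and "green2 \<equiv> parallel (mvec l1 l3 \<rho> (-1) u1 u3) e2"
  shows "(red1 \<longrightarrow> EC1) \<and> (green1 \<longrightarrow> EC2) \<and> (red2 \<longrightarrow> EC3) \<and> (green2 \<longrightarrow> EC4)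
         \<and> (red1 \<or> green1 \<or> red2 \<or> green2 \<longrightarrow> EC1 \<or> EC2 \<or> EC3 \<or> EC4)"
  proof -
  define a where "a = sqrt (1 - l1\<^sup>2)"
  define bb where "bb = sqrt (l3\<^sup>2 - 1)"
  define D where "D = sqrt (l3\<^sup>2 - l1\<^sup>2)"
  define k where "k = (l3 - l1) / (\<rho> * D)"
  have l1sq: "l1\<^sup>2 < 1" using eigs by (simp add: power_less_one_iff abs_less_iff)
  have a2: "a\<^sup>2 = 1 - l1\<^sup>2" unfolding a_def using l1sq by simp
  have bb2: "bb\<^sup>2 = l3\<^sup>2 - 1" unfolding bb_def using eigs by (simp add: abs_square_less_1)
  have l13: "l1\<^sup>2 < l3\<^sup>2" using eigs by (simp add: power_strict_mono)
  have D2: "D\<^sup>2 = l3\<^sup>2 - l1\<^sup>2" unfolding D_def using l13 by simp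
  have apos: "a > 0" unfolding a_def using l1sq by simp
  have bbpos: "bb > 0" unfolding bb_def using eigs by (simp add: abs_square_less_1)
  have Dpos: "D > 0" unfolding D_def using l13 by simp
  have kne: "k \<noteq> 0" unfolding k_def using Dpos rho eigs by simp
  have u11: "u1 \<bullet> u1 = 1" "u3 \<bullet> u3 = 1" using on_u by (simp_all add: norm_eq_1)
  have u31: "u3 \<bullet> u1 = 0" using on_u by (simp add: inner_commute)
  have e2u: "e2 \<bullet> u1 = - s" "e2 \<bullet> u3 = c" using orient unfolding c_def s_def by (simp_all add: inner_commute)
  have e1u: "e1 \<bullet> u1 = c" "e1 \<bullet> u3 = s" unfolding c_def s_def by (simp_all add: inner_commute)
  have bvu: "bvec l1 l3 \<rho> \<kappa> u1 u3 \<bullet> u1 = \<rho> / D * (l3 * a)"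
            "bvec l1 l3 \<rho> \<kappa> u1 u3 \<bullet> u3 = \<rho> / D * (\<kappa> * l1 * bb)" for \<kappa>
    unfolding bvec_def a_def[symmetric] bb_def[symmetric] D_def[symmetric]
    by (simp_all add: inner_add_left inner_diff_left u11 u31 inner_commute[of u1 u3])
  have mvu: "mvec l1 l3 \<rho> \<kappa> u1 u3 \<bullet> u1 = k * (- a)"
            "mvec l1 l3 \<rho> \<kappa> u1 u3 \<bullet> u3 = k * (\<kappa> * bb)" for \<kappa>
    unfolding mvec_def a_def[symmetric] bb_def[symmetric] D_def[symmetric] k_def[symmetric]
    by (simp_all add: inner_add_left inner_diff_left u11 u31 inner_commute[of u1 u3])
  have bvb: "bvec l1 l3 \<rho> \<kappa> u1 u3 \<bullet> bvec l1 l3 \<rho> \<kappa> u1 u3 = \<rho>\<^sup>2" if "\<kappa>\<^sup>2 = 1" for \<kappa>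
  proof -
    have "bvec l1 l3 \<rho> \<kappa> u1 u3 \<bullet> bvec l1 l3 \<rho> \<kappa> u1 u3
        = (\<rho> / D)\<^sup>2 * ((l3 * a)\<^sup>2 + \<kappa>\<^sup>2 * (l1 * bb)\<^sup>2)"
      unfolding bvec_def a_def[symmetric] bb_def[symmetric] D_def[symmetric]
      by (simp add: inner_add_left inner_add_right u11 u31 inner_commute[of u1 u3] power2_eq_square algebra_simps)
    also have "\<dots> = (\<rho> / D)\<^sup>2 * D\<^sup>2" proof -
      have "(l3 * a)\<^sup>2 + \<kappa>\<^sup>2 * (l1 * bb)\<^sup>2 = D\<^sup>2"
        by (simp add: power_mult_distrib a2 bb2 D2 that algebra_simps)
      thus ?thesis by simp
    qed
    also have "\<dots> = \<rho>\<^sup>2" using Dpos by (simp add: power_divide)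
    finally show ?thesis .
  qed
  have Uu: "(U *v x) \<bullet> u1 = l1 * (x \<bullet> u1)" "(U *v x) \<bullet> u3 = l3 * (x \<bullet> u3)" for x
    using sym_dot[OF U_sym, of x] eig1 eig3 by simp_all
  have kr: "\<rho>\<^sup>2 * k = \<rho> * (l3 - l1) / D" unfolding k_def using rho by (simp add: power2_eq_square)
  have R1: "red1 \<longrightarrow> EC1"
  proof
    assume h: red1
    define z where "z = transpose Rp *v bvec l1 l3 \<rho> 1 u1 u3"
    have Uz: "U *v z = bvec l1 l3 \<rho> 1 u1 u3 + \<rho>\<^sup>2 *\<^sub>R mvec l1 l3 \<rho> 1 u1 u3"
      unfolding z_def using RtB[OF U_sym Rp(2)] bvb[of 1] by simp
    have "l1 * (z \<bullet> u1) = \<rho> / D * (l3 * a) + \<rho>\<^sup>2 * (k * (- a))"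
      using Uu(1)[of z] Uz bvu mvu by (simp add: inner_add_left)
    also have "\<dots> = l1 * (\<rho> * a / D)" unfolding k_def using rho Dpos by (simp add: field_simps power2_eq_square)
    finally have z1: "z \<bullet> u1 = \<rho> * a / D" using eigs by (metis mult_left_cancel less_irrefl less_trans zero_less_one)
    have "l3 * (z \<bullet> u3) = \<rho> / D * (l1 * bb) + \<rho>\<^sup>2 * (k * bb)"
      using Uu(2)[of z] Uz bvu mvu by (simp add: inner_add_left)
    also have "\<dots> = l3 * (\<rho> * bb / D)" unfolding k_def using rho Dpos by (simp add: field_simps power2_eq_square)
    finally have z3: "z \<bullet> u3 = \<rho> * bb / D" using eigs by (metis mult_left_cancel less_irrefl less_trans zero_less_one)
    have "(z \<bullet> u1) * ((U *v e2) \<bullet> u3) = (z \<bullet> u3) * ((U *v e2) \<bullet> u1)"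
      using par_det[OF h[unfolded red1_def z_def[symmetric]]] .
    hence "(\<rho> / D) * (a * l3 * c) = (\<rho> / D) * (- bb * l1 * s)"
      using z1 z3 Uu e2u by (simp add: algebra_simps)
    hence "(\<rho> / D) * ((a * l3 * c) - (- bb * l1 * s)) = 0" by (simp only: right_diff_distrib)
    hence "(a * l3 * c) - (- bb * l1 * s) = 0" using rho Dpos by simp
    hence "a * l3 * c = - bb * l1 * s" by simp
    thus EC1 unfolding EC1_def a_def bb_def by (simp add: algebra_simps)
  qed
  have G1: "green1 \<longrightarrow> EC2"
  proof
    assume h: green1
    define z where "z = transpose Rm *v bvec l1 l3 \<rho> (-1) u1 u3"
    have Uz: "U *v z = bvec l1 l3 \<rho> (-1) u1 u3 + \<rho>\<^sup>2 *\<^sub>R mvec l1 l3 \<rho> (-1) u1 u3"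
      unfolding z_def using RtB[OF U_sym Rm(2)] bvb[of "-1"] by simp
    have "l1 * (z \<bullet> u1) = \<rho> / D * (l3 * a) + \<rho>\<^sup>2 * (k * (- a))"
      using Uu(1)[of z] Uz bvu mvu by (simp add: inner_add_left)
    also have "\<dots> = l1 * (\<rho> * a / D)" unfolding k_def using rho Dpos by (simp add: field_simps power2_eq_square)
    finally have z1: "z \<bullet> u1 = \<rho> * a / D" using eigs by (metis mult_left_cancel less_irrefl less_trans zero_less_one)
    have "l3 * (z \<bullet> u3) = \<rho> / D * (- l1 * bb) + \<rho>\<^sup>2 * (k * (- bb))"
      using Uu(2)[of z] Uz bvu mvu by (simp add: inner_add_left)
    also have "\<dots> = l3 * (- \<rho> * bb / D)" unfolding k_def using rho Dpos by (simp add: field_simps power2_eq_square)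
    finally have z3: "z \<bullet> u3 = - \<rho> * bb / D" using eigs by (metis mult_left_cancel less_irrefl less_trans zero_less_one)
    have "(z \<bullet> u1) * ((U *v e1) \<bullet> u3) = (z \<bullet> u3) * ((U *v e1) \<bullet> u1)"
      using par_det[OF h[unfolded green1_def z_def[symmetric]]] .
    hence "(\<rho> / D) * (a * l3 * s) = (\<rho> / D) * (- bb * l1 * c)"
      using z1 z3 Uu e1u by (simp add: algebra_simps)
    hence "(\<rho> / D) * ((a * l3 * s) - (- bb * l1 * c)) = 0" by (simp only: right_diff_distrib)
    hence "(a * l3 * s) - (- bb * l1 * c) = 0" using rho Dpos by simp
    hence "a * l3 * s = - bb * l1 * c" by simp
    thus EC2 unfolding EC2_def a_def bb_def by (simp add: algebra_simps)
  qed
  have R2: "red2 \<longrightarrow> EC3"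
  proof
    assume h: red2
    have "(mvec l1 l3 \<rho> 1 u1 u3 \<bullet> u1) * (e1 \<bullet> u3) = (mvec l1 l3 \<rho> 1 u1 u3 \<bullet> u3) * (e1 \<bullet> u1)"
      using par_det[OF h[unfolded red2_def]] .
    hence "k * (- a * s) = k * (bb * c)" using mvu e1u by (simp add: algebra_simps)
    hence "- a * s = bb * c" using kne mult_left_cancel by blast
    thus EC3 unfolding EC3_def a_def bb_def by (simp add: algebra_simps)
  qed
  have G2: "green2 \<longrightarrow> EC4"
  proof
    assume h: green2
    have "(mvec l1 l3 \<rho> (-1) u1 u3 \<bullet> u1) * (e2 \<bullet> u3) = (mvec l1 l3 \<rho> (-1) u1 u3 \<bullet> u3) * (e2 \<bullet> u1)"
      using par_det[OF h[unfolded green2_def]] .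
    hence "k * (- a * c) = k * (bb * s)" using mvu e2u by (simp add: algebra_simps)
    hence "- a * c = bb * s" using kne mult_left_cancel by blast
    thus EC4 unfolding EC4_def a_def bb_def by (simp add: algebra_simps)
  qed
  show ?thesis using R1 G1 R2 G2 by blast
qed

end
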